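(* Let $p\geq1$, $\mu>0$, and let $g:\mathbb{R}^n\to\mathbb{R}\cup\{+\infty\}$ be convex. Let $\lambda^{\ast}$ be the optimal solution of $$\min_{\lambda\in\mathbb{R}^n}\Big\{g(\lambda)+\frac{\mu}{1+\frac1p}\lVert\lambda\rVert^{1+\frac1p}\Big\},$$ and suppose $\lambda^{\ast}\neq0$. Let $\lambda^k\in\mathbb{R}^n$ with $\lVert\lambda^k\rVert>0$, set $t^k=\lVert\lambda^k\rVert^{\frac1p-1}$, and let $\lambda^{k+1}=\arg\min_{\lambda\in\mathbb{R}^n}\{g(\lambda)+\frac{\mu}{2}t^k\lVert\lambda\rVert^2\}$. Then $$\big(\lVert\lambda^k\rVert^{1-\frac1p}-\lVert\lambda^{\ast}\rVert^{1-\frac1p}\big)\big(\lVert\lambda^{k+1}\rVert^2-\lVert\lambda^{\ast}\rVert^2\big)\geq0,$$ and $$\big(\lVert\lambda^k\rVert^{1-\frac1p}-\lVert\lambda^{\ast}\rVert^{1-\frac1p}\big)\big(\lVert\lambda^k\rVert^{1-\frac1p}-\lVert\lambda^{k+1}\rVert^{1-\frac1p}\big)\geq0.$$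
   Context: $\lVert\cdot\rVert$ is the Euclidean norm. The minimizers above are assumed to exist. This is one step of the fixed point iteration: given $\lambda^k$, set $t^k=\lVert\lambda^k\rVert^{1/p-1}$ if $\lambda^k\neq0$ and $t^k=0$ otherwise, and $\lambda^{k+1}=\arg\min_\lambda\{g(\lambda)+\frac{\mu}{2}t^k\lVert\lambda\rVert^2\}$. *)

theory Defs
  imports "HOL-Analysis.Analysis"
begin

end

theory Submission
  imports Defs
begin

lemma first_order:
  fixes g phi :: "'a::real_vector \<Rightarrow> real"
  assumes D: "convex D" and gc: "convex_on D g" and x: "x \<in> D" and l: "l \<in> D"
    and opt: "\<forall>z\<in>D. g x + phi x \<le> g z + phi z"
    and der: "((\<lambda>t. phi (x + t *\<^sub>R (l - x))) has_real_derivative L) (at 0)"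
  shows "g x - g l \<le> L"
proof -
  let ?f = "\<lambda>t. phi (x + t *\<^sub>R (l - x))"
  have lim: "((\<lambda>t. (?f t - ?f 0) / (t - 0)) \<longlongrightarrow> L) (at_right 0)"
  proof -
    have "(?f has_real_derivative L) (at 0 within {0<..})"
      using der has_field_derivative_at_within by blast
    then show ?thesis unfolding has_field_derivative_iff .
  qed
  have ev: "eventually (\<lambda>t. g x - g l \<le> (?f t - ?f 0) / (t - 0)) (at_right 0)"
    using eventually_at_right_real[of 0 "1::real", OF zero_less_one]
  proof eventually_elim
    case (elim t)
    then have t: "0 < t" "t < 1" by auto
    have eq: "x + t *\<^sub>R (l - x) = (1 - t) *\<^sub>R x + t *\<^sub>R l" by (simp add: algebra_simps)
    have inD: "x + t *\<^sub>R (l - x) \<in> D" unfolding eq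
      using D x l t by (simp add: convex_def)
    have gz: "g (x + t *\<^sub>R (l - x)) \<le> (1 - t) * g x + t * g l"
      unfolding eq using convex_onD[OF gc, of t x l] x l t by simp
    have "g x + phi x \<le> g (x + t *\<^sub>R (l - x)) + ?f t" using opt inD by auto
    with gz have "t * (g x - g l) \<le> ?f t - ?f 0" by (simp add: algebra_simps)
    then show ?case using t by (simp add: field_simps)
  qed
  show ?thesis
    by (rule tendsto_le[OF trivial_limit_at_right_real lim tendsto_const ev])
qed

lemma norm_powr_eq: "norm (z::'a::real_inner) powr r = (z \<bullet> z) powr (r/2)"
proof -
  have "norm z = (z \<bullet> z) powr (1/2)"
    by (simp add: norm_eq_sqrt_inner powr_half_sqrt)
  then show ?thesis by (simp add: powr_powr)
qed

lemma normpow_deriv: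
  fixes x d :: "'a::real_inner"
  assumes x: "x \<noteq> 0"
  shows "((\<lambda>t. norm (x + t *\<^sub>R d) powr r) has_real_derivative r * norm x powr (r - 2) * (x \<bullet> d)) (at 0)"
proof -
  have P: "((\<lambda>t. (x + t *\<^sub>R d) \<bullet> (x + t *\<^sub>R d)) has_real_derivative 2 * (x \<bullet> d)) (at 0)"
  proof -
    have e: "(\<lambda>t. (x + t *\<^sub>R d) \<bullet> (x + t *\<^sub>R d)) = (\<lambda>t. x \<bullet> x + 2 * t * (x \<bullet> d) + t^2 * (d \<bullet> d))"
      by (auto simp: algebra_simps inner_commute power2_eq_square)
    show ?thesis unfolding e
      by (auto intro!: derivative_eq_intros)
  qed
  have pos: "(x + 0 *\<^sub>R d) \<bullet> (x + 0 *\<^sub>R d) > 0" using x by simp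
  have D: "((\<lambda>t. ((x + t *\<^sub>R d) \<bullet> (x + t *\<^sub>R d)) powr (r/2)) has_real_derivative
     (r/2) * ((x + 0 *\<^sub>R d) \<bullet> (x + 0 *\<^sub>R d)) powr (r/2 - of_nat 1) * (2 * (x \<bullet> d))) (at 0)"
    by (rule DERIV_fun_powr[OF P pos])
  have v: "(r/2) * ((x + 0 *\<^sub>R d) \<bullet> (x + 0 *\<^sub>R d)) powr (r/2 - of_nat 1) * (2 * (x \<bullet> d))
        = r * norm x powr (r - 2) * (x \<bullet> d)"
    using norm_powr_eq[of x "r - 2"] by (simp add: field_simps)
  show ?thesis using D unfolding v norm_powr_eq by simp
qed

lemma real_part:
  fixes a s b q :: real
  assumes a: "a > 0" and s: "s > 0" and b: "b \<ge> 0" and q: "0 < q" "q \<le> 1"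
    and key: "(s powr (q-1) * s - a powr (q-1) * b) * (b - s) \<ge> 0"
  shows "(a powr (1 - q) - s powr (1 - q)) * (b\<^sup>2 - s\<^sup>2) \<ge> 0
       \<and> (a powr (1 - q) - s powr (1 - q)) * (a powr (1 - q) - b powr (1 - q)) \<ge> 0"
proof -
  define m where "m = a powr (1-q) * s powr q"
  have ap: "a powr (1-q) > 0" using a by simp
  have "a powr (1-q) * (s powr (q-1) * s - a powr (q-1) * b) = m - b"
  proof -
    have "a powr (1-q) * a powr (q-1) = 1" using a by (simp add: powr_add[symmetric])
    moreover have "s powr (q-1) * s = s powr q" using s powr_add[of s "q-1" 1] by simp
    ultimately show ?thesis unfolding m_def by (simp add: algebra_simps)
  qed
  then have key2: "(m - b) * (b - s) \<ge> 0"
    using key ap by (metis mult.assoc mult_nonneg_nonneg less_imp_le)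
  have bt: "(s \<le> b \<and> b \<le> a) \<or> (a \<le> b \<and> b \<le> s)"
  proof (cases "s \<le> a")
    case True
    have "m \<le> a powr (1-q) * a powr q" unfolding m_def
      by (rule mult_left_mono[OF powr_mono2]) (use True s q in auto)
    also have "\<dots> = a" using a by (simp add: powr_add[symmetric])
    finally have m1: "m \<le> a" .
    have "s = s powr (1-q) * s powr q" using s by (simp add: powr_add[symmetric])
    also have "\<dots> \<le> m" unfolding m_def
      by (rule mult_right_mono[OF powr_mono2]) (use True s q in auto)
    finally have m2: "s \<le> m" .
    have "s \<le> b \<and> b \<le> m"
    proof (rule ccontr)
      assume "\<not> (s \<le> b \<and> b \<le> m)"
      then have "b < s \<or> m < b" by auto
      then show False
      proof
        assume "b < s" then have "m - b > 0" "b - s < 0" using m2 by auto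
        then have "(m-b)*(b-s) < 0" by (rule mult_pos_neg) then show False using key2 by linarith
      next
        assume "m < b" then have "m - b < 0" "b - s > 0" using m2 by auto
        then have "(m-b)*(b-s) < 0" by (rule mult_neg_pos) then show False using key2 by linarith
      qed
    qed
    then show ?thesis using m1 by auto
  next
    case False
    have "a = a powr (1-q) * a powr q" using a by (simp add: powr_add[symmetric])
    also have "\<dots> \<le> m" unfolding m_def
      by (rule mult_left_mono[OF powr_mono2]) (use False a q in auto)
    finally have m1: "a \<le> m" .
    have "m \<le> s powr (1-q) * s powr q" unfolding m_def
      by (rule mult_right_mono[OF powr_mono2]) (use False a s q in auto)
    also have "\<dots> = s" using s by (simp add: powr_add[symmetric])
    finally have m2: "m \<le> s" .
    have "m \<le> b \<and> b \<le> s"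
    proof (rule ccontr)
      assume "\<not> (m \<le> b \<and> b \<le> s)"
      then have "b < m \<or> s < b" by auto
      then show False
      proof
        assume "b < m" then have "m - b > 0" "b - s < 0" using m2 by auto
        then have "(m-b)*(b-s) < 0" by (rule mult_pos_neg) then show False using key2 by linarith
      next
        assume "s < b" then have "m - b < 0" "b - s > 0" using m2 by auto
        then have "(m-b)*(b-s) < 0" by (rule mult_neg_pos) then show False using key2 by linarith
      qed
    qed
    then show ?thesis using m1 by auto
  qed
  then show ?thesis
  proof
    assume h: "s \<le> b \<and> b \<le> a"
    have 1: "a powr (1 - q) - s powr (1 - q) \<ge> 0" using h s q by (simp add: powr_mono2)
    have 2: "b\<^sup>2 - s\<^sup>2 \<ge> 0" using h s by (simp add: power_mono)
    have 3: "a powr (1 - q) - b powr (1 - q) \<ge> 0" using h s q by (simp add: powr_mono2)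
    show ?thesis using 1 2 3 by simp
  next
    assume h: "a \<le> b \<and> b \<le> s"
    have 1: "a powr (1 - q) - s powr (1 - q) \<le> 0" using h a q by (simp add: powr_mono2)
    have 2: "b\<^sup>2 - s\<^sup>2 \<le> 0" using h a by (simp add: power_mono)
    have 3: "a powr (1 - q) - b powr (1 - q) \<le> 0" using h a q by (simp add: powr_mono2)
    show ?thesis using 1 2 3 by (simp add: mult_nonpos_nonpos)
  qed
qed

lemma normsq_deriv:
  fixes x d :: "'a::real_inner"
  shows "((\<lambda>t. (norm (x + t *\<^sub>R d))\<^sup>2) has_real_derivative 2 * (x \<bullet> d)) (at 0)"
proof -
  have e: "(\<lambda>t. (norm (x + t *\<^sub>R d))\<^sup>2) = (\<lambda>t. x \<bullet> x + 2 * t * (x \<bullet> d) + t^2 * (d \<bullet> d))"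
    unfolding power2_norm_eq_inner by (auto simp: algebra_simps inner_commute power2_eq_square)
  show ?thesis unfolding e
    by (auto intro!: derivative_eq_intros)
qed

theorem lemma4p4:
  fixes g :: "'a::euclidean_space \<Rightarrow> real"
    and D :: "'a set"
    and p \<mu> :: real
    and lstar lk lk1 :: 'a
  assumes p: "p \<ge> 1" and mu: "\<mu> > 0"
    and D_convex: "convex D" and g_convex: "convex_on D g"
    and lstar_in: "lstar \<in> D"
    and lstar_opt: "\<forall>l\<in>D. g lstar + \<mu> / (1 + 1/p) * norm lstar powr (1 + 1/p)
                          \<le> g l + \<mu> / (1 + 1/p) * norm l powr (1 + 1/p)"
    and lstar_nz: "lstar \<noteq> 0"
    and lk_pos: "norm lk > 0"
    and lk1_in: "lk1 \<in> D"
    and lk1_opt: "\<forall>l\<in>D. g lk1 + \<mu> / 2 * (norm lk powr (1/p - 1)) * (norm lk1)\<^sup>2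
                        \<le> g l + \<mu> / 2 * (norm lk powr (1/p - 1)) * (norm l)\<^sup>2"
  shows "(norm lk powr (1 - 1/p) - norm lstar powr (1 - 1/p))
           * ((norm lk1)\<^sup>2 - (norm lstar)\<^sup>2) \<ge> 0
         \<and> (norm lk powr (1 - 1/p) - norm lstar powr (1 - 1/p))
           * (norm lk powr (1 - 1/p) - norm lk1 powr (1 - 1/p)) \<ge> 0"
proof -
  define q where "q = 1/p"
  have q: "0 < q" "q \<le> 1" using p by (auto simp: q_def)
  define S where "S = norm lstar powr (q - 1)"
  define A where "A = norm lk powr (q - 1)"
  let ?x = lstar and ?y = lk1
  have d1: "((\<lambda>t. \<mu> / (1 + q) * norm (?x + t *\<^sub>R (?y - ?x)) powr (1 + q)) has_real_derivative
      \<mu> / (1 + q) * ((1 + q) * norm ?x powr (1 + q - 2) * (?x \<bullet> (?y - ?x)))) (at 0)"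
    by (rule DERIV_cmult[OF normpow_deriv[OF lstar_nz]])
  have v1: "\<mu> / (1 + q) * ((1 + q) * norm ?x powr (1 + q - 2) * (?x \<bullet> (?y - ?x))) = \<mu> * S * (?x \<bullet> (?y - ?x))"
    using q by (simp add: S_def field_simps)
  have I1: "g ?x - g ?y \<le> \<mu> * S * (?x \<bullet> (?y - ?x))"
  proof -
    have o: "\<forall>z\<in>D. g ?x + \<mu> / (1 + q) * norm ?x powr (1 + q) \<le> g z + \<mu> / (1 + q) * norm z powr (1 + q)"
      using lstar_opt unfolding q_def .
    show ?thesis
      by (rule first_order[OF D_convex g_convex lstar_in lk1_in, of "\<lambda>z. \<mu> / (1 + q) * norm z powr (1 + q)", OF o d1[unfolded v1]])
  qed
  have d2: "((\<lambda>t. \<mu> / 2 * A * (norm (?y + t *\<^sub>R (?x - ?y)))\<^sup>2) has_real_derivative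
      \<mu> / 2 * A * (2 * (?y \<bullet> (?x - ?y)))) (at 0)"
    by (rule DERIV_cmult[OF normsq_deriv])
  have I2: "g ?y - g ?x \<le> \<mu> * A * (?y \<bullet> (?x - ?y))"
  proof -
    have o: "\<forall>z\<in>D. g ?y + \<mu> / 2 * A * (norm ?y)\<^sup>2 \<le> g z + \<mu> / 2 * A * (norm z)\<^sup>2"
      using lk1_opt unfolding A_def q_def .
    have v: "\<mu> / 2 * A * (2 * (?y \<bullet> (?x - ?y))) = \<mu> * A * (?y \<bullet> (?x - ?y))" by simp
    show ?thesis
      by (rule first_order[OF D_convex g_convex lk1_in lstar_in, of "\<lambda>z. \<mu> / 2 * A * (norm z)\<^sup>2", OF o d2[unfolded v]])
  qed
  have sum: "0 \<le> S * (?x \<bullet> ?y - (norm ?x)\<^sup>2) + A * (?x \<bullet> ?y - (norm ?y)\<^sup>2)"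
  proof -
    have "0 \<le> \<mu> * (S * (?x \<bullet> ?y - (norm ?x)\<^sup>2) + A * (?x \<bullet> ?y - (norm ?y)\<^sup>2))"
      using I1 I2 by (simp add: algebra_simps inner_diff_right power2_norm_eq_inner inner_commute)
    then show ?thesis using mu by (simp add: zero_le_mult_iff)
  qed
  have cs: "?x \<bullet> ?y \<le> norm ?x * norm ?y" by (rule norm_cauchy_schwarz)
  have SA: "S > 0" "A > 0" using lstar_nz lk_pos by (auto simp: S_def A_def)
  have "0 \<le> S * (norm ?x * norm ?y - (norm ?x)\<^sup>2) + A * (norm ?x * norm ?y - (norm ?y)\<^sup>2)"
  proof -
    have "S * (?x \<bullet> ?y - (norm ?x)\<^sup>2) \<le> S * (norm ?x * norm ?y - (norm ?x)\<^sup>2)"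
      using SA cs by (intro mult_left_mono) auto
    moreover have "A * (?x \<bullet> ?y - (norm ?y)\<^sup>2) \<le> A * (norm ?x * norm ?y - (norm ?y)\<^sup>2)"
      using SA cs by (intro mult_left_mono) auto
    ultimately show ?thesis using sum by linarith
  qed
  then have key: "(norm ?x powr (q-1) * norm ?x - norm lk powr (q-1) * norm ?y) * (norm ?y - norm ?x) \<ge> 0"
    unfolding S_def[symmetric] A_def[symmetric] by (simp add: algebra_simps power2_eq_square)
  have "0 < norm ?x" using lstar_nz by simp
  from real_part[OF lk_pos this norm_ge_zero q key]
  show ?thesis unfolding q_def .
qed

end
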